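(* Let $G$ be a realization of a bounded budget network creation game $(b_1,\dots,b_n)$-BG and let $u$ be a vertex of $G$. If either $c_{MAX}(u)\le 2$ and $u$ is not contained in any brace, or $c_{MAX}(u)=1$, then $u$ is playing its best response in both the MAX version and the SUM version of the game.
   Context: Bounded budget network creation game $(b_1,\dots,b_n)$-BG: $n$ players with integer budgets $0\le b_i\le n-1$. A strategy of player $i$ is a set $S_i\subseteq\{1,\dots,n\}\setminus\{i\}$ with $|S_i|=b_i$; a profile is realized by the directed graph $G$ on $u_1,\dots,u_n$ with an arc $\overrightarrow{u_iu_j}$ iff $j\in S_i$ (a realization). A brace is a pair $\{u,v\}$ such that both $\overrightarrow{uv}$ and $\overrightarrow{vu}$ are arcs. $U(G)$ is the undirected multigraph obtained by ignoring directions; $\operatorname{dist}(u,v)$ is the distance in $U(G)$, defined as $n^2$ between different components. SUM cost: $c_{SUM}(u)=\sum_v\operatorname{dist}(u,v)$; MAX cost: $c_{MAX}(u)=\max_v\operatorname{dist}(u,v)+(\kappa-1)n^2$, $\kappa$ the number of components of $U(G)$. A vertex plays its best response (in a version) if it cannot decrease its cost (of that version) by changing its own strategy while the other strategies are fixed. *)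

theory Defs
  imports Main
begin

text \<open>Players/vertices are 0,...,n-1 (vertex u_i is i). A profile S assigns to each
player i < n its strategy S i; the realization has an arc i->j iff j \<in> S i.\<close>

definition valid_profile :: "nat \<Rightarrow> (nat \<Rightarrow> nat) \<Rightarrow> (nat \<Rightarrow> nat set) \<Rightarrow> bool" where
  "valid_profile n b S \<longleftrightarrow> (\<forall>i<n. S i \<subseteq> {0..<n} - {i} \<and> card (S i) = b i)"

definition adj :: "nat \<Rightarrow> (nat \<Rightarrow> nat set) \<Rightarrow> nat \<Rightarrow> nat \<Rightarrow> bool" where
  "adj n S u w \<longleftrightarrow> u < n \<and> w < n \<and> (w \<in> S u \<or> u \<in> S w)"

fun reach :: "nat \<Rightarrow> (nat \<Rightarrow> nat set) \<Rightarrow> nat \<Rightarrow> nat \<Rightarrow> nat \<Rightarrow> bool" where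
  "reach n S 0 u v = (u = v)"
| "reach n S (Suc k) u v = (\<exists>w. adj n S u w \<and> reach n S k w v)"

definition connected_in :: "nat \<Rightarrow> (nat \<Rightarrow> nat set) \<Rightarrow> nat \<Rightarrow> nat \<Rightarrow> bool" where
  "connected_in n S u v \<longleftrightarrow> (\<exists>k. reach n S k u v)"

definition gdist :: "nat \<Rightarrow> (nat \<Rightarrow> nat set) \<Rightarrow> nat \<Rightarrow> nat \<Rightarrow> nat" where
  "gdist n S u v = (if connected_in n S u v then (LEAST k. reach n S k u v) else n^2)"

definition num_components :: "nat \<Rightarrow> (nat \<Rightarrow> nat set) \<Rightarrow> nat" where
  "num_components n S = card {C. \<exists>u<n. C = {v. v < n \<and> connected_in n S u v}}"

definition c_SUM :: "nat \<Rightarrow> (nat \<Rightarrow> nat set) \<Rightarrow> nat \<Rightarrow> nat" where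
  "c_SUM n S u = (\<Sum>v<n. gdist n S u v)"

definition c_MAX :: "nat \<Rightarrow> (nat \<Rightarrow> nat set) \<Rightarrow> nat \<Rightarrow> nat" where
  "c_MAX n S u = Max {gdist n S u v | v. v < n} + (num_components n S - 1) * n^2"

definition in_brace :: "nat \<Rightarrow> (nat \<Rightarrow> nat set) \<Rightarrow> nat \<Rightarrow> bool" where
  "in_brace n S u \<longleftrightarrow> (\<exists>v<n. v \<in> S u \<and> u \<in> S v)"

definition best_response ::
  "(nat \<Rightarrow> (nat \<Rightarrow> nat set) \<Rightarrow> nat \<Rightarrow> nat) \<Rightarrow> nat \<Rightarrow> (nat \<Rightarrow> nat) \<Rightarrow> (nat \<Rightarrow> nat set) \<Rightarrow> nat \<Rightarrow> bool" where
  "best_response c n b S u \<longleftrightarrow>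
     (\<forall>T. T \<subseteq> {0..<n} - {u} \<and> card T = b u \<longrightarrow> c n S u \<le> c n (S(u := T)) u)"

end

theory Submission
  imports Defs
begin

lemma gd_self: "gdist n S u u = 0"
proof -
  have "connected_in n S u u" unfolding connected_in_def by (rule exI[of _ 0]) simp
  moreover have "(LEAST k. reach n S k u u) = 0" by (rule Least_equality) auto
  ultimately show ?thesis unfolding gdist_def by simp
qed

lemma gd_ge1: assumes "v \<noteq> u" "u < n" shows "gdist n S u v \<ge> 1"
proof (cases "connected_in n S u v")
  case True
  then obtain k where k: "reach n S k u v" unfolding connected_in_def by blast
  have "reach n S (LEAST k. reach n S k u v) u v" using k by (rule LeastI)
  then have "(LEAST k. reach n S k u v) \<noteq> 0" using assms by (metis reach.simps(1))
  then show ?thesis using True unfolding gdist_def by simp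
next
  case False
  then show ?thesis using assms unfolding gdist_def by simp
qed

lemma gd_ge2: assumes "v \<noteq> u" "\<not> adj n S u v" "2 \<le> n" shows "gdist n S u v \<ge> 2"
proof (cases "connected_in n S u v")
  case True
  then obtain k where k: "reach n S k u v" unfolding connected_in_def by blast
  have r: "reach n S (LEAST k. reach n S k u v) u v" using k by (rule LeastI)
  have "(LEAST k. reach n S k u v) \<noteq> 0" using assms r by (metis reach.simps(1))
  moreover have "(LEAST k. reach n S k u v) \<noteq> 1" using assms r by (metis One_nat_def reach.simps)
  ultimately show ?thesis using True unfolding gdist_def by simp
next
  case False
  have "(2::nat) * 1 \<le> n * n" using assms(3) by (intro mult_le_mono) auto
  then have "(2::nat) \<le> n^2" by (simp add: power2_eq_square)
  then show ?thesis using False unfolding gdist_def by simp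
qed

lemma gd_le1: assumes "adj n S u v" shows "gdist n S u v \<le> 1"
proof -
  have r: "reach n S 1 u v" using assms by simp
  then have "connected_in n S u v" unfolding connected_in_def by blast
  moreover have "(LEAST k. reach n S k u v) \<le> 1" using r by (rule Least_le)
  ultimately show ?thesis unfolding gdist_def by simp
qed

lemma Mfin: "{gdist n S u v | v. v < n} = (\<lambda>v. gdist n S u v) ` {..<n}" by auto

lemma gd_le_Max: assumes "v < n" shows "gdist n S u v \<le> Max {gdist n S u v | v. v < n}"
  unfolding Mfin using assms by (intro Max_ge) auto

lemma Max_le_c: "Max {gdist n S u v | v. v < n} \<le> c_MAX n S u"
  unfolding c_MAX_def by simp

lemma c_eq_Max: assumes "2 \<le> n" "c_MAX n S u \<le> 2" shows "c_MAX n S u = Max {gdist n S u v | v. v < n}"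
proof -
  have "(2::nat) * 2 \<le> n * n" using assms(1) by (intro mult_le_mono) auto
  then have "4 \<le> n^2" by (simp add: power2_eq_square)
  moreover have "(num_components n S - 1) * n^2 \<le> 2" using assms(2) unfolding c_MAX_def by simp
  ultimately have "(num_components n S - 1) * n^2 = 0"
  proof -
    assume a: "4 \<le> n^2" "(num_components n S - 1) * n^2 \<le> 2"
    show ?thesis
    proof (rule ccontr)
      assume "(num_components n S - 1) * n^2 \<noteq> 0"
      then have "num_components n S - 1 \<ge> 1" by (metis mult_is_0 less_one not_le)
      then have "1 * n^2 \<le> (num_components n S - 1) * n^2" by (intro mult_le_mono1)
      then have "n^2 \<le> (num_components n S - 1) * n^2" by (simp only: mult_1)
      then show False using a by linarith
    qed
  qed
  then show ?thesis unfolding c_MAX_def by simp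
qed

lemma sum_id: assumes "finite B" "A \<subseteq> B"
  shows "(\<Sum>v\<in>B. (if v \<in> A then 1 else 2::nat)) + card A = 2 * card B"
  using assms
proof (induction B arbitrary: A rule: finite_induct)
  case empty then show ?case by simp
next
  case (insert x F)
  have IH: "(\<Sum>v\<in>F. (if v \<in> A - {x} then 1 else 2::nat)) + card (A - {x}) = 2 * card F"
    using insert by (intro insert.IH) auto
  have e: "(\<Sum>v\<in>F. (if v \<in> A - {x} then 1 else 2::nat)) = (\<Sum>v\<in>F. (if v \<in> A then 1 else 2::nat))"
    using insert by (intro sum.cong) auto
  show ?case
  proof (cases "x \<in> A")
    case True
    have "card A = Suc (card (A - {x}))" using True insert
      by (metis card_Suc_Diff1 finite_insert finite_subset)
    then show ?thesis using IH e insert True by simp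
  next
    case False
    then have "A - {x} = A" by auto
    then show ?thesis using IH e insert False by simp
  qed
qed

theorem mainTheorem12:
  fixes n :: nat and b :: "nat \<Rightarrow> nat" and S :: "nat \<Rightarrow> nat set" and u :: nat
  assumes budgets: "\<forall>i<n. b i \<le> n - 1"
    and real: "valid_profile n b S"
    and u: "u < n"
    and hyp: "(c_MAX n S u \<le> 2 \<and> \<not> in_brace n S u) \<or> c_MAX n S u = 1"
  shows "best_response c_MAX n b S u \<and> best_response c_SUM n b S u"
proof -
  have Su: "S u \<subseteq> {0..<n} - {u}" "card (S u) = b u" using real u unfolding valid_profile_def by auto
  have cle: "c_MAX n S u \<le> 2" using hyp by auto
  have gle2: "gdist n S u v \<le> 2" if "v < n" for v
    using gd_le_Max[OF that, of S u] Max_le_c[of n S u] cle by linarith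
  define V where "V = {..<n} - {u}"
  have finV: "finite V" unfolding V_def by simp
  have sumV: "c_SUM n S' u = (\<Sum>v\<in>V. gdist n S' u v)" for S'
  proof -
    have "c_SUM n S' u = gdist n S' u u + (\<Sum>v\<in>V. gdist n S' u v)"
      unfolding c_SUM_def V_def using u by (subst sum.remove[of _ u]) auto
    then show ?thesis by (simp add: gd_self)
  qed
  have key: "c_MAX n S u \<le> c_MAX n (S(u := T)) u \<and> c_SUM n S u \<le> c_SUM n (S(u := T)) u"
    if T: "T \<subseteq> {0..<n} - {u}" "card T = b u" for T
  proof (cases "T = S u")
    case True
    then have "S(u := T) = S" by auto
    then show ?thesis by simp
  next
    case False
    define S' where "S' = S(u := T)"
    have n2: "2 \<le> n"
    proof (rule ccontr)
      assume "\<not> 2 \<le> n"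
      then have "n = 1" using u by linarith
      then have "T = {}" "S u = {}" using T Su u by auto
      then show False using False by simp
    qed
    have cM: "c_MAX n S u = Max {gdist n S u v | v. v < n}" using c_eq_Max[OF n2 cle] .
    have adj': "adj n S' u v \<longleftrightarrow> v \<in> T \<or> u \<in> S v" if "v \<in> V" for v
      using that T u unfolding adj_def S'_def V_def by auto
    have adjS: "adj n S u v \<longleftrightarrow> v \<in> S u \<or> u \<in> S v" if "v \<in> V" for v
      using that u unfolding adj_def V_def by auto
    have g1: "gdist n S' u v \<ge> 1" if "v \<in> V" for v using that u gd_ge1 unfolding V_def by auto
    have newM: "gdist n S' u v \<le> c_MAX n S' u" if "v \<in> V" for v
      using gd_le_Max[of v n S' u] Max_le_c[of n S' u] that unfolding V_def by auto
    define v0 where "v0 = (if u = 0 then 1 else 0::nat)"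
    have v0: "v0 \<in> V" using n2 u unfolding V_def v0_def by auto
    show ?thesis
    proof (cases "c_MAX n S u = 1")
      case True
      have a: "c_MAX n S u \<le> c_MAX n S' u" using True newM[OF v0] g1[OF v0] by linarith
      have g1o: "gdist n S u v \<le> 1" if "v \<in> V" for v
        using gd_le_Max[of v n S u] cM True that unfolding V_def by auto
      have "c_SUM n S u \<le> (\<Sum>v\<in>V. 1)" unfolding sumV by (rule sum_mono) (use g1o in auto)
      also have "\<dots> \<le> c_SUM n S' u" unfolding sumV by (rule sum_mono) (use g1 in auto)
      finally show ?thesis using a S'_def by simp
    next
      case c2: False
      then have nb: "\<not> in_brace n S u" using hyp by auto
      define In where "In = {v\<in>V. u \<in> S v}"
      have finIn: "finite In" using finV unfolding In_def by simp
      have N: "{v\<in>V. adj n S u v} = S u \<union> In" using Su u unfolding In_def V_def adj_def by auto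
      have N': "{v\<in>V. adj n S' u v} = T \<union> In" using T u unfolding In_def V_def adj_def S'_def by auto
      have disj: "S u \<inter> In = {}" using nb Su unfolding In_def in_brace_def V_def by auto
      have finT: "finite T" using T finite_subset by blast
      have finSu: "finite (S u)" using Su finite_subset by blast
      have cardN: "card {v\<in>V. adj n S u v} = b u + card In"
        unfolding N using card_Un_disjoint[OF finSu finIn disj] Su by simp
      have cardN': "card {v\<in>V. adj n S' u v} \<le> b u + card In"
        unfolding N' using card_Un_le[of T In] T by simp
      have cc: "card {v\<in>V. adj n S' u v} \<le> card {v\<in>V. adj n S u v}" using cardN cardN' by simp
      have id1: "(\<Sum>v\<in>V. (if v \<in> {v\<in>V. adj n S u v} then 1 else 2::nat)) + card {v\<in>V. adj n S u v} = 2 * card V"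
        by (rule sum_id[OF finV]) auto
      have id2: "(\<Sum>v\<in>V. (if v \<in> {v\<in>V. adj n S' u v} then 1 else 2::nat)) + card {v\<in>V. adj n S' u v} = 2 * card V"
        by (rule sum_id[OF finV]) auto
      have "c_SUM n S u \<le> (\<Sum>v\<in>V. (if v \<in> {v\<in>V. adj n S u v} then 1 else 2::nat))"
        unfolding sumV by (rule sum_mono) (use gd_le1 gle2 in \<open>auto simp: V_def\<close>)
      also have "\<dots> \<le> (\<Sum>v\<in>V. (if v \<in> {v\<in>V. adj n S' u v} then 1 else 2::nat))"
        using id1 id2 cc by linarith
      also have "\<dots> \<le> c_SUM n S' u"
        unfolding sumV by (rule sum_mono) (use g1 gd_ge2[OF _ _ n2] in \<open>auto simp: V_def\<close>)
      finally have sumok: "c_SUM n S u \<le> c_SUM n S' u" .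
      have maxok: "c_MAX n S u \<le> c_MAX n S' u"
      proof (cases "\<exists>v\<in>V. \<not> adj n S' u v")
        case True
        then obtain v where v: "v \<in> V" "\<not> adj n S' u v" by blast
        have "2 \<le> gdist n S' u v" using gd_ge2[OF _ v(2) n2] v(1) unfolding V_def by auto
        then show ?thesis using newM[OF v(1)] cle by linarith
      next
        case False
        then have "{v\<in>V. adj n S' u v} = V" by auto
        then have "card V \<le> card {v\<in>V. adj n S u v}" using cc by simp
        then have "{v\<in>V. adj n S u v} = V" using finV
          by (metis (no_types, lifting) card_seteq mem_Collect_eq subsetI)
        then have "\<forall>v\<in>V. gdist n S u v \<le> 1" using gd_le1 by blast
        then have "\<forall>x\<in>{gdist n S u v | v. v < n}. x \<le> 1" using gd_self unfolding V_def
          by fastforce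
        then have "Max {gdist n S u v | v. v < n} \<le> 1" unfolding Mfin using u by (subst Max_le_iff) auto
        then show ?thesis using cM newM[OF v0] g1[OF v0] by linarith
      qed
      show ?thesis using sumok maxok S'_def by simp
    qed
  qed
  show ?thesis unfolding best_response_def using key by blast
qed

end
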